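(* Let $\Sigma$ be a first-order language and let $\mathcal{T}_{\Sigma,\infty}$ be the family of all complete theories in $\Sigma$ having infinite models. If $\Sigma$ is finite and contains no predicate symbols of arity $m\ge 2$ and no function symbols of arity $n\ge 1$, then ${\rm RS}(\mathcal{T}_{\Sigma,\infty})$ is finite (a natural number); otherwise ${\rm RS}(\mathcal{T}_{\Sigma,\infty})=\infty$.
   Context: Theories are complete consistent first-order theories; structures have nonempty universes. Function symbols (constants being $0$-ary function symbols) are treated via their graphs: each $n$-ary function symbol $f$ is replaced by an $(n+1)$-ary predicate $R_f=\{(\bar a,b)\mid f(\bar a)=b\}$, and sentences are those of the resulting relational language. For a family $\mathcal{T}$ of theories and a sentence $\varphi$ of its language, $\mathcal{T}_\varphi=\{T\in\mathcal{T}\mid\varphi\in T\}$. The rank ${\rm RS}$ of a family is defined as follows: ${\rm RS}(\emptyset)=-1$; ${\rm RS}(\mathcal{T})=0$ for finite nonempty $\mathcal{T}$; ${\rm RS}(\mathcal{T})\ge 1$ for infinite $\mathcal{T}$; for $\alpha=\beta+1$, ${\rm RS}(\mathcal{T})\ge\alpha$ iff there are pairwise inconsistent sentences $\varphi_k$, $k\in\omega$, of the language of $\mathcal{T}$ with ${\rm RS}(\mathcal{T}_{\varphi_k})\ge\beta$ for all $k$; for limit $\alpha$, ${\rm RS}(\mathcal{T})\ge\alpha$ iff ${\rm RS}(\mathcal{T})\ge\beta$ for all $\beta<\alpha$; ${\rm RS}(\mathcal{T})=\alpha$ iff ${\rm RS}(\mathcal{T})\ge\alpha$ and not ${\rm RS}(\mathcal{T})\ge\alpha+1$;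 ${\rm RS}(\mathcal{T})=\infty$ if ${\rm RS}(\mathcal{T})\ge\alpha$ for every ordinal $\alpha$. *)

theory Defs
  imports Main
begin

text \<open>Sentences are
those of the relational language in which each f \<in> F is replaced by the
(farr f + 1)-ary predicate R_f (symbol Inr f); predicate symbols are Inl p.
First-order logic with equality; variables are natural numbers.\<close>

datatype ('p, 'f) fm =
    Eq nat nat
  | Rel "'p + 'f" "nat list"
  | Neg "('p, 'f) fm"
  | Conj "('p, 'f) fm" "('p, 'f) fm"
  | Ex nat "('p, 'f) fm"

fun fv :: "('p, 'f) fm \<Rightarrow> nat set" where
  "fv (Eq x y) = {x, y}"
| "fv (Rel s xs) = set xs"
| "fv (Neg \<phi>) = fv \<phi>"
| "fv (Conj \<phi> \<psi>) = fv \<phi> \<union> fv \<psi>"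
| "fv (Ex x \<phi>) = fv \<phi> - {x}"

fun wf_fm :: "'p set \<Rightarrow> 'f set \<Rightarrow> ('p \<Rightarrow> nat) \<Rightarrow> ('f \<Rightarrow> nat) \<Rightarrow> ('p, 'f) fm \<Rightarrow> bool" where
  "wf_fm P F parr farr (Eq x y) = True"
| "wf_fm P F parr farr (Rel (Inl p) xs) = (p \<in> P \<and> length xs = parr p)"
| "wf_fm P F parr farr (Rel (Inr f) xs) = (f \<in> F \<and> length xs = Suc (farr f))"
| "wf_fm P F parr farr (Neg \<phi>) = wf_fm P F parr farr \<phi>"
| "wf_fm P F parr farr (Conj \<phi> \<psi>) = (wf_fm P F parr farr \<phi> \<and> wf_fm P F parr farr \<psi>)"
| "wf_fm P F parr farr (Ex x \<phi>) = wf_fm P F parr farr \<phi>"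

definition sentence :: "'p set \<Rightarrow> 'f set \<Rightarrow> ('p \<Rightarrow> nat) \<Rightarrow> ('f \<Rightarrow> nat) \<Rightarrow> ('p, 'f) fm \<Rightarrow> bool" where
  "sentence P F parr farr \<phi> \<longleftrightarrow> wf_fm P F parr farr \<phi> \<and> fv \<phi> = {}"

record ('u, 'p, 'f) struc =
  univ :: "'u set"
  preds :: "'p \<Rightarrow> 'u list \<Rightarrow> bool"
  funs :: "'f \<Rightarrow> 'u list \<Rightarrow> 'u"

definition is_struc :: "'f set \<Rightarrow> ('f \<Rightarrow> nat) \<Rightarrow> ('u, 'p, 'f) struc \<Rightarrow> bool" where
  "is_struc F farr M \<longleftrightarrow> univ M \<noteq> {} \<and>
     (\<forall>f\<in>F. \<forall>as. set as \<subseteq> univ M \<and> length as = farr f \<longrightarrow> funs M f as \<in> univ M)"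

fun sat :: "('u, 'p, 'f) struc \<Rightarrow> (nat \<Rightarrow> 'u) \<Rightarrow> ('p, 'f) fm \<Rightarrow> bool" where
  "sat M e (Eq x y) = (e x = e y)"
| "sat M e (Rel (Inl p) xs) = preds M p (map e xs)"
| "sat M e (Rel (Inr f) xs) = (xs \<noteq> [] \<and> funs M f (map e (butlast xs)) = e (last xs))"
| "sat M e (Neg \<phi>) = (\<not> sat M e \<phi>)"
| "sat M e (Conj \<phi> \<psi>) = (sat M e \<phi> \<and> sat M e \<psi>)"
| "sat M e (Ex x \<phi>) = (\<exists>a\<in>univ M. sat M (e(x := a)) \<phi>)"

definition models :: "('u, 'p, 'f) struc \<Rightarrow> ('p, 'f) fm \<Rightarrow> bool" where
  "models M \<phi> \<longleftrightarrow> (\<forall>e. range e \<subseteq> univ M \<longrightarrow> sat M e \<phi>)"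

text \<open>Universes of structures are taken inside the fixed type below, whose cardinality
is |P| + |F| + aleph_0 or more; by the downward Loewenheim-Skolem theorem every
consistent set of sentences has a model of this kind, and every complete theory
with an infinite model has an infinite model of this kind.\<close>
type_synonym ('p, 'f) U = "'p + 'f + nat"

definition Th :: "'p set \<Rightarrow> 'f set \<Rightarrow> ('p \<Rightarrow> nat) \<Rightarrow> ('f \<Rightarrow> nat)
    \<Rightarrow> ('u, 'p, 'f) struc \<Rightarrow> ('p, 'f) fm set" where
  "Th P F parr farr M = {\<phi>. sentence P F parr farr \<phi> \<and> models M \<phi>}"

definition T_inf :: "'p set \<Rightarrow> 'f set \<Rightarrow> ('p \<Rightarrow> nat) \<Rightarrow> ('f \<Rightarrow> nat) \<Rightarrow> ('p, 'f) fm set set" where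
  "T_inf P F parr farr =
     {Th P F parr farr M | M :: (('p, 'f) U, 'p, 'f) struc. is_struc F farr M \<and> infinite (univ M)}"

definition inconsistent :: "'p set \<Rightarrow> 'f set \<Rightarrow> ('p \<Rightarrow> nat) \<Rightarrow> ('f \<Rightarrow> nat)
    \<Rightarrow> ('p, 'f) fm \<Rightarrow> ('p, 'f) fm \<Rightarrow> bool" where
  "inconsistent P F parr farr \<phi> \<psi> \<longleftrightarrow>
     \<not> (\<exists>M :: (('p, 'f) U, 'p, 'f) struc. is_struc F farr M \<and> models M \<phi> \<and> models M \<psi>)"

definition restrict_fam :: "('p, 'f) fm set set \<Rightarrow> ('p, 'f) fm \<Rightarrow> ('p, 'f) fm set set" where
  "restrict_fam \<T> \<phi> = {T \<in> \<T>. \<phi> \<in> T}"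

definition is_zero :: "'o::wellorder \<Rightarrow> bool" where
  "is_zero \<alpha> \<longleftrightarrow> (\<forall>\<gamma>. \<alpha> \<le> \<gamma>)"

definition is_succ_of :: "'o::wellorder \<Rightarrow> 'o \<Rightarrow> bool" where
  "is_succ_of \<beta> \<alpha> \<longleftrightarrow> \<beta> < \<alpha> \<and> (\<forall>\<gamma>. \<beta> < \<gamma> \<longrightarrow> \<alpha> \<le> \<gamma>)"

text \<open>This is a recursion on the
well-order; written as an inductive predicate, whose least fixed point coincides
with the recursively defined relation.\<close>
inductive RS_ge :: "'p set \<Rightarrow> 'f set \<Rightarrow> ('p \<Rightarrow> nat) \<Rightarrow> ('f \<Rightarrow> nat)
    \<Rightarrow> ('p, 'f) fm set set \<Rightarrow> 'o::wellorder \<Rightarrow> bool"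
  for P F parr farr where
  zero: "is_zero (\<alpha>::'o::wellorder) \<Longrightarrow> \<T> \<noteq> {} \<Longrightarrow> RS_ge P F parr farr \<T> \<alpha>"
| one: "is_zero (\<beta>::'o::wellorder) \<Longrightarrow> is_succ_of \<beta> \<alpha> \<Longrightarrow> infinite \<T> \<Longrightarrow> RS_ge P F parr farr \<T> \<alpha>"
| succ: "is_succ_of (\<beta>::'o::wellorder) \<alpha> \<Longrightarrow> \<not> is_zero \<beta> \<Longrightarrow>
     (\<forall>k::nat. sentence P F parr farr (\<phi> k)) \<Longrightarrow>
     (\<forall>i j. i \<noteq> j \<longrightarrow> inconsistent P F parr farr (\<phi> i) (\<phi> j)) \<Longrightarrow>
     (\<forall>k. RS_ge P F parr farr (restrict_fam \<T> (\<phi> k)) \<beta>) \<Longrightarrow> RS_ge P F parr farr \<T> \<alpha>"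
| limit: "\<not> is_zero (\<alpha>::'o::wellorder) \<Longrightarrow> \<not> (\<exists>\<beta>. is_succ_of \<beta> \<alpha>) \<Longrightarrow>
     (\<forall>\<beta><\<alpha>. RS_ge P F parr farr \<T> \<beta>) \<Longrightarrow> RS_ge P F parr farr \<T> \<alpha>"

end

theory Submission
  imports Defs "HOL-Computational_Algebra.Primes" "HOL-Library.Nat_Bijection" "HOL-Library.Extended_Nat"
begin

lemma sat_fv_agree:
  "(\<forall>x\<in>fv \<phi>. e x = e' x) \<Longrightarrow> sat M e \<phi> = sat M e' \<phi>"
proof (induction \<phi> arbitrary: e e')
  case (Rel s xs)
  then show ?case
  proof (cases s)
    case (Inl p)
    have "map e xs = map e' xs" using Rel by (auto intro!: map_cong)
    then show ?thesis using Inl by (simp del: map_eq_conv)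
  next
    case (Inr f)
    have "map e (butlast xs) = map e' (butlast xs)" using Rel
      by (auto simp: map_eq_conv dest: in_set_butlastD)
    moreover have "xs \<noteq> [] \<Longrightarrow> e (last xs) = e' (last xs)" using Rel by simp
    ultimately show ?thesis using Inr by (auto simp del: map_eq_conv)
  qed
next
  case (Ex x \<phi>)
  have "\<And>a. sat M (e(x:=a)) \<phi> = sat M (e'(x:=a)) \<phi>"
    by (rule Ex.IH) (use Ex.prems in auto)
  then show ?case by simp
next
  case (Conj a b)
  have "sat M e a = sat M e' a" by (rule Conj.IH(1)) (use Conj.prems in auto)
  moreover have "sat M e b = sat M e' b" by (rule Conj.IH(2)) (use Conj.prems in auto)
  ultimately show ?case by simp
qed auto

lemma models_sentence:
  assumes "fv \<phi> = {}" "univ M \<noteq> {}"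
  shows "models M \<phi> \<longleftrightarrow> (\<exists>e. range e \<subseteq> univ M \<and> sat M e \<phi>)"
proof -
  obtain a where a: "a \<in> univ M" using assms by auto
  have "range (\<lambda>_. a) \<subseteq> univ M" using a by auto
  moreover have "sat M e \<phi> = sat M e' \<phi>" for e e' using sat_fv_agree[of \<phi> e e'] assms by simp
  ultimately show ?thesis unfolding models_def by blast
qed

lemma models_Neg:
  assumes "fv \<phi> = {}" "univ M \<noteq> {}"
  shows "models M (Neg \<phi>) \<longleftrightarrow> \<not> models M \<phi>"
proof -
  have "sat M e \<phi> = sat M e' \<phi>" for e e' using sat_fv_agree[of \<phi> e e'] assms by simp
  then show ?thesis using models_sentence[OF assms] unfolding models_def by auto
qed

lemma models_Conj: "models M (Conj \<phi> \<psi>) \<longleftrightarrow> models M \<phi> \<and> models M \<psi>"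
  unfolding models_def by auto

definition TT :: "('p,'f) fm" where "TT = Ex 0 (Eq 0 0)"

definition lit :: "(nat \<Rightarrow> ('p,'f) fm) \<Rightarrow> nat \<times> bool \<Rightarrow> ('p,'f) fm" where
  "lit \<psi> ib = (if snd ib then \<psi> (fst ib) else Neg (\<psi> (fst ib)))"

definition theta :: "(nat \<Rightarrow> ('p,'f) fm) \<Rightarrow> bool list \<Rightarrow> ('p,'f) fm" where
  "theta \<psi> L = foldr (\<lambda>ib acc. Conj (lit \<psi> ib) acc) (zip [0..<length L] L) TT"

lemma theta_list_sentence:
  assumes "\<forall>i. sentence P F parr farr (\<psi> i)"
  shows "sentence P F parr farr (foldr (\<lambda>ib acc. Conj (lit \<psi> ib) acc) xs TT)"
  using assms by (induction xs) (auto simp: sentence_def TT_def lit_def)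

lemma theta_sentence:
  assumes "\<forall>i. sentence P F parr farr (\<psi> i)"
  shows "sentence P F parr farr (theta \<psi> L)"
  unfolding theta_def by (rule theta_list_sentence[OF assms])

lemma theta_list_models:
  assumes "\<forall>i. sentence P F parr farr (\<psi> i)" "univ M \<noteq> {}"
  shows "models M (foldr (\<lambda>ib acc. Conj (lit \<psi> ib) acc) xs TT) \<longleftrightarrow>
          (\<forall>(i,b)\<in>set xs. models M (\<psi> i) = b)"
proof (induction xs)
  case Nil
  then show ?case using assms(2) by (auto simp: TT_def models_def)
next
  case (Cons ib xs)
  have "models M (lit \<psi> ib) \<longleftrightarrow> models M (\<psi> (fst ib)) = snd ib"
    using models_Neg[of "\<psi> (fst ib)" M] assms by (auto simp: lit_def sentence_def)
  then show ?case using Cons by (auto simp: models_Conj)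
qed

lemma theta_models:
  assumes "\<forall>i. sentence P F parr farr (\<psi> i)" "univ M \<noteq> {}"
  shows "models M (theta \<psi> L) \<longleftrightarrow> (\<forall>i<length L. models M (\<psi> i) = L!i)"
proof -
  have "set (zip [0..<length L] L) = {(i, L!i) | i. i < length L}"
    by (auto simp: set_zip) (metis nth_upt add_0)
  then show ?thesis unfolding theta_def theta_list_models[OF assms] by fastforce
qed

lemma rs_inf:
  fixes \<psi> :: "nat \<Rightarrow> ('p,'f) fm"
  assumes sent: "\<forall>i. sentence P F parr farr (\<psi> i)"
    and real: "\<And>L. \<exists>M::(('p,'f) U,'p,'f) struc. is_struc F farr M \<and> infinite (univ M) \<and>
                  (\<forall>i<length L. models M (\<psi> i) = L!i)"
  shows "RS_ge P F parr farr (T_inf P F parr farr) (\<alpha>::'o::wellorder)"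
proof -
  let ?T = "T_inf P F parr farr"
  let ?R = "\<lambda>L. restrict_fam ?T (theta \<psi> L)"
  define ch where "ch L k = theta \<psi> (L @ replicate k False @ [True])" for L k
  have ne: "univ M \<noteq> {}" if "is_struc F farr M" for M :: "(('p,'f) U,'p,'f) struc"
    using that by (simp add: is_struc_def)
  have thsent: "sentence P F parr farr (theta \<psi> L)" for L by (rule theta_sentence[OF sent])
  have thfv: "fv (theta \<psi> L) = {}" for L using thsent by (simp add: sentence_def)
  have mem: "theta \<psi> L \<in> Th P F parr farr M \<longleftrightarrow> (\<forall>i<length L. models M (\<psi> i) = L!i)"
    if "is_struc F farr M" for L and M :: "(('p,'f) U,'p,'f) struc"
    using theta_models[OF sent ne[OF that]] thsent by (simp add: Th_def)
  have F3: "restrict_fam (?R L) (ch L k) = restrict_fam ?T (ch L k)" for L k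
  proof -
    have "theta \<psi> L \<in> T" if T1: "T \<in> ?T" and T2: "ch L k \<in> T" for T
    proof -
      obtain M :: "(('p,'f) U,'p,'f) struc" where M: "T = Th P F parr farr M" "is_struc F farr M" "infinite (univ M)"
        using T1 unfolding T_inf_def by blast
      have "\<forall>i<length (L @ replicate k False @ [True]). models M (\<psi> i) = (L @ replicate k False @ [True])!i"
        using T2 mem[OF M(2)] M(1) unfolding ch_def by blast
      then have "\<forall>i<length L. models M (\<psi> i) = L!i" by (auto simp: nth_append)
      then show ?thesis using mem[OF M(2)] M(1) by blast
    qed
    then show ?thesis unfolding restrict_fam_def by blast
  qed
  have F4: "\<not> (ch L i \<in> Th P F parr farr M \<and> ch L j \<in> Th P F parr farr M)"
    if "i \<noteq> j" "is_struc F farr M" for L i j and M :: "(('p,'f) U,'p,'f) struc"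
  proof
    assume a: "ch L i \<in> Th P F parr farr M \<and> ch L j \<in> Th P F parr farr M"
    have h: "models M (\<psi> n) = (L @ replicate k False @ [True])!n"
      if "ch L k \<in> Th P F parr farr M" "n < length L + k + 1" for k n
      using that mem[OF \<open>is_struc F farr M\<close>] unfolding ch_def by auto
    have wl: False if "ch L a \<in> Th P F parr farr M" "ch L b \<in> Th P F parr farr M" "a < b" for a b
    proof -
      have "models M (\<psi> (length L + a)) = True" using h[OF that(1), of "length L + a"]
        by (simp add: nth_append)
      moreover have "models M (\<psi> (length L + a)) = False" using h[OF that(2), of "length L + a"] that(3)
        by (simp add: nth_append)
      ultimately show False by simp
    qed
    show False using a \<open>i \<noteq> j\<close> wl by (metis linorder_neqE_nat)
  qed
  have F4': "inconsistent P F parr farr (ch L i) (ch L j)" if "i \<noteq> j" for L i j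
    unfolding inconsistent_def
  proof
    assume "\<exists>M::(('p,'f) U,'p,'f) struc. is_struc F farr M \<and> models M (ch L i) \<and> models M (ch L j)"
    then obtain M :: "(('p,'f) U,'p,'f) struc" where "is_struc F farr M" "models M (ch L i)" "models M (ch L j)" by blast
    then show False using F4[OF that, of M L] thsent unfolding ch_def Th_def by auto
  qed
  have F5: "?R L \<noteq> {}" for L
  proof -
    obtain M :: "(('p,'f) U,'p,'f) struc" where M: "is_struc F farr M" "infinite (univ M)"
      "\<forall>i<length L. models M (\<psi> i) = L!i" using real by blast
    have "Th P F parr farr M \<in> ?R L" using M mem[OF M(1)]
      unfolding restrict_fam_def T_inf_def by blast
    then show ?thesis by blast
  qed
  have F6: "infinite (?R L)" for L
  proof
    assume fin: "finite (?R L)"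
    define t where "t k = (SOME T. T \<in> restrict_fam ?T (ch L k))" for k
    have tin: "t k \<in> restrict_fam ?T (ch L k)" for k
      using F5[of "L @ replicate k False @ [True]"] unfolding t_def ch_def by (metis some_in_eq)
    have "inj t"
    proof (rule injI, rule ccontr)
      fix i j assume "t i = t j" "i \<noteq> j"
      then have "t i \<in> ?T" "ch L i \<in> t i" "ch L j \<in> t i" using tin[of i] tin[of j]
        unfolding restrict_fam_def by auto
      then obtain M :: "(('p,'f) U,'p,'f) struc" where "t i = Th P F parr farr M" "is_struc F farr M"
        unfolding T_inf_def by blast
      then show False using F4[OF \<open>i \<noteq> j\<close>, of M L] \<open>ch L i \<in> t i\<close> \<open>ch L j \<in> t i\<close> by simp
    qed
    moreover have "range t \<subseteq> ?R L" using tin F3 unfolding restrict_fam_def by blast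
    ultimately show False using fin by (meson finite_subset infinite_iff_countable_subset)
  qed
  have main: "\<forall>L. RS_ge P F parr farr (?R L) \<alpha>"
  proof (induction \<alpha> rule: less_induct)
    case (less \<alpha>)
    show ?case
    proof
      fix L
      show "RS_ge P F parr farr (?R L) \<alpha>"
      proof (cases "is_zero \<alpha>")
        case True
        then show ?thesis using F5 by (intro RS_ge.zero) auto
      next
        case nz: False
        show ?thesis
        proof (cases "\<exists>\<beta>. is_succ_of \<beta> \<alpha>")
          case True
          then obtain \<beta> where b: "is_succ_of \<beta> \<alpha>" by blast
          show ?thesis
          proof (cases "is_zero \<beta>")
            case True
            then show ?thesis using b F6 by (intro RS_ge.one) auto
          next
            case False
            have lt: "\<beta> < \<alpha>" using b by (simp add: is_succ_of_def)
            show ?thesis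
            proof (rule RS_ge.succ[OF b False])
              show "\<forall>k. sentence P F parr farr (ch L k)" unfolding ch_def using thsent by blast
              show "\<forall>i j. i \<noteq> j \<longrightarrow> inconsistent P F parr farr (ch L i) (ch L j)" using F4' by blast
              show "\<forall>k. RS_ge P F parr farr (restrict_fam (?R L) (ch L k)) \<beta>"
                using less[OF lt] F3 unfolding ch_def by simp
            qed
          qed
        next
          case False
          show ?thesis
            by (rule RS_ge.limit[OF nz False]) (use less in blast)
        qed
      qed
    qed
  qed
  have "?R [] = ?T"
  proof -
    have "theta \<psi> [] \<in> T" if "T \<in> ?T" for T
      using that mem unfolding T_inf_def by auto
    then show ?thesis unfolding restrict_fam_def by blast
  qed
  then show ?thesis using main by metis
qed

lemma infinite_U: "infinite (UNIV :: ('p,'f) U set)"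
proof
  assume "finite (UNIV :: ('p,'f) U set)"
  then have "finite (range (\<lambda>n::nat. (Inr (Inr n) :: ('p,'f) U)))" by (rule finite_subset[rotated]) auto
  moreover have "inj (\<lambda>n::nat. (Inr (Inr n) :: ('p,'f) U))" by (auto intro: injI)
  ultimately show False using finite_imageD by blast
qed

lemma is_struc_UNIV: "is_struc F farr \<lparr>univ = UNIV, preds = pr, funs = fu\<rparr>"
  by (simp add: is_struc_def)

lemma case_a:
  fixes P :: "'p set" and F :: "'f set" and parr :: "'p \<Rightarrow> nat" and farr :: "'f \<Rightarrow> nat"
  assumes "infinite P"
  shows "RS_ge P F parr farr (T_inf P F parr farr) (\<alpha>::'o::wellorder)"
proof -
  obtain pp :: "nat \<Rightarrow> 'p" where pp: "inj pp" "range pp \<subseteq> P"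
    using infinite_countable_subset[OF assms] by blast
  define \<psi> :: "nat \<Rightarrow> ('p,'f) fm" where "\<psi> i = Ex 0 (Rel (Inl (pp i)) (replicate (parr (pp i)) 0))" for i
  show ?thesis
  proof (rule rs_inf)
    show "\<forall>i. sentence P F parr farr (\<psi> i)" using pp by (auto simp: \<psi>_def sentence_def)
    fix L :: "bool list"
    define M :: "(('p,'f) U,'p,'f) struc" where
      "M = \<lparr>univ = UNIV, preds = (\<lambda>p _. \<exists>i<length L. p = pp i \<and> L!i), funs = (\<lambda>_ _. Inr (Inr 0))\<rparr>"
    have "models M (\<psi> i) = L!i" if "i < length L" for i
    proof -
      have "models M (\<psi> i) \<longleftrightarrow> (\<exists>j<length L. pp i = pp j \<and> L!j)"
        by (simp add: models_def M_def \<psi>_def)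
      also have "\<dots> \<longleftrightarrow> L!i" using that pp(1) by (auto dest: injD)
      finally show ?thesis .
    qed
    then show "\<exists>M::(('p,'f) U,'p,'f) struc. is_struc F farr M \<and> infinite (univ M) \<and>
                  (\<forall>i<length L. models M (\<psi> i) = L!i)"
    proof (intro exI[of _ M] conjI)
      show "is_struc F farr M" unfolding M_def by (rule is_struc_UNIV)
      show "infinite (univ M)" using infinite_U by (simp add: M_def)
    qed auto
  qed
qed

lemma case_b:
  fixes P :: "'p set" and F :: "'f set" and parr :: "'p \<Rightarrow> nat" and farr :: "'f \<Rightarrow> nat"
  assumes "infinite F"
  shows "RS_ge P F parr farr (T_inf P F parr farr) (\<alpha>::'o::wellorder)"
proof -
  obtain ff :: "nat \<Rightarrow> 'f" where ff: "inj ff" "range ff \<subseteq> F"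
    using infinite_countable_subset[OF assms] by blast
  define A :: "'f \<Rightarrow> ('p,'f) fm" where "A f = Rel (Inr f) (replicate (farr f) 1 @ [0])" for f
  define \<psi> :: "nat \<Rightarrow> ('p,'f) fm" where "\<psi> i = Ex 0 (Ex 1 (Conj (A (ff 0)) (A (ff (Suc i)))))" for i
  show ?thesis
  proof (rule rs_inf)
    show "\<forall>i. sentence P F parr farr (\<psi> i)" using ff by (auto simp: \<psi>_def A_def sentence_def)
    fix L :: "bool list"
    define M :: "(('p,'f) U,'p,'f) struc" where
      "M = \<lparr>univ = UNIV, preds = (\<lambda>_ _. False),
            funs = (\<lambda>f _. if \<exists>i<length L. f = ff (Suc i) \<and> \<not> L!i then Inr (Inr 1) else Inr (Inr 0))\<rparr>"
    have "models M (\<psi> i) = L!i" if "i < length L" for i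
    proof -
      have f0: "funs M (ff 0) xs = Inr (Inr 0)" for xs using ff(1) by (auto simp: M_def dest: injD)
      have sA: "sat M e (A f) \<longleftrightarrow> funs M f (replicate (farr f) (e 1)) = e 0" for e f
        by (simp add: A_def butlast_append)
      have uM: "univ M = UNIV" by (simp add: M_def)
      have "models M (\<psi> i) \<longleftrightarrow> (\<forall>e::nat \<Rightarrow> ('p,'f) U. \<exists>a b. funs M (ff 0) (replicate (farr (ff 0)) b) = a \<and>
              funs M (ff (Suc i)) (replicate (farr (ff (Suc i))) b) = a)"
        unfolding models_def \<psi>_def by (simp add: sA uM)
      also have "\<dots> \<longleftrightarrow> funs M (ff (Suc i)) (replicate (farr (ff (Suc i))) (Inr (Inr 0))) = Inr (Inr 0)"
        by (simp add: f0) (simp add: M_def)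
      also have "\<dots> \<longleftrightarrow> L!i" using that ff(1) by (auto simp: M_def dest: injD)
      finally show ?thesis .
    qed
    then show "\<exists>M::(('p,'f) U,'p,'f) struc. is_struc F farr M \<and> infinite (univ M) \<and>
                  (\<forall>i<length L. models M (\<psi> i) = L!i)"
    proof (intro exI[of _ M] conjI)
      show "is_struc F farr M" unfolding M_def by (rule is_struc_UNIV)
      show "infinite (univ M)" using infinite_U by (simp add: M_def)
    qed auto
  qed
qed

fun G :: "(nat \<Rightarrow> nat \<Rightarrow> ('p,'f) fm) \<Rightarrow> nat \<Rightarrow> nat \<Rightarrow> ('p,'f) fm" where
  "G A 0 cur = Eq cur 0"
| "G A (Suc m) cur = Ex (if cur = 1 then 2 else 1) (Conj (A cur (if cur = 1 then 2 else 1)) (G A m (if cur = 1 then 2 else 1)))"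

lemma G_sat:
  assumes "\<And>e x y. sat M e (A x y) \<longleftrightarrow> g (e x) = e y" "univ M = UNIV"
  shows "sat M e (G A m cur) \<longleftrightarrow> (g ^^ m) (e cur) = e 0"
proof (induction m arbitrary: e cur)
  case 0
  then show ?case by simp
next
  case (Suc m)
  define o' where "o' = (if cur = 1 then 2 else (1::nat))"
  have o: "o' \<noteq> cur" "o' \<noteq> 0" unfolding o'_def by auto
  have "sat M e (G A (Suc m) cur) \<longleftrightarrow> (\<exists>a. sat M (e(o':=a)) (A cur o') \<and> sat M (e(o':=a)) (G A m o'))"
    by (simp add: o'_def assms(2))
  also have "\<dots> \<longleftrightarrow> (\<exists>a. g (e cur) = a \<and> (g ^^ m) a = e 0)"
    using o by (simp add: assms(1) Suc.IH)
  also have "\<dots> \<longleftrightarrow> (g ^^ Suc m) (e cur) = e 0" by (metis comp_apply funpow_Suc_right)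
  finally show ?case .
qed

lemma G_fv:
  assumes "\<And>x y. fv (A x y) \<subseteq> {x, y}"
  shows "fv (G A m cur) \<subseteq> {0, cur}"
proof (induction m arbitrary: cur)
  case (Suc m)
  then show ?case using assms[of cur "if cur = 1 then 2 else 1"] by auto
qed simp

lemma G_wf:
  assumes "\<And>x y. wf_fm P F parr farr (A x y)"
  shows "wf_fm P F parr farr (G A m cur)"
  by (induction m arbitrary: cur) (auto simp: assms)

definition cyc :: "(nat \<Rightarrow> nat) \<Rightarrow> nat set \<Rightarrow> ('p,'f) U \<Rightarrow> ('p,'f) U" where
  "cyc q Ch x = (case x of Inr (Inr n) \<Rightarrow>
      (let (j, r) = prod_decode n in
        if j \<in> Ch \<and> r < q j then Inr (Inr (prod_encode (j, Suc r mod q j)))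
        else Inr (Inr (prod_encode (j, Suc r))))
    | _ \<Rightarrow> Inr (Inr 0))"

lemma cyc_enc:
  "cyc q Ch (Inr (Inr (prod_encode (j, r)))) =
    (if j \<in> Ch \<and> r < q j then Inr (Inr (prod_encode (j, Suc r mod q j)))
        else Inr (Inr (prod_encode (j, Suc r))))"
  by (simp add: cyc_def)

lemma cyc_on:
  assumes "j \<in> Ch" "r < q j"
  shows "(cyc q Ch ^^ n) (Inr (Inr (prod_encode (j, r)))) = Inr (Inr (prod_encode (j, (r + n) mod q j)))"
proof (induction n)
  case 0 then show ?case using assms by simp
next
  case (Suc n)
  have "(r + n) mod q j < q j" using assms by simp
  then show ?case using Suc assms by (simp add: cyc_enc mod_Suc_eq)
qed

lemma cyc_off:
  assumes "\<not> (j \<in> Ch \<and> r < q j)"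
  shows "(cyc q Ch ^^ n) (Inr (Inr (prod_encode (j, r)))) = Inr (Inr (prod_encode (j, r + n)))"
proof (induction n)
  case (Suc n)
  then show ?case using assms by (auto simp: cyc_enc)
qed simp

lemma cyc_periodic:
  assumes "n > 0" "\<forall>j. q j > 0"
  shows "(\<exists>x::('p,'f) U. (cyc q Ch ^^ n) x = x) \<longleftrightarrow> (\<exists>j\<in>Ch. q j dvd n)"
proof
  assume "\<exists>x::('p,'f) U. (cyc q Ch ^^ n) x = x"
  then obtain x :: "('p,'f) U" where x: "(cyc q Ch ^^ n) x = x" by blast
  have rng: "(cyc q Ch ^^ Suc k) y \<in> range (\<lambda>m. Inr (Inr m))" for k y
    by (cases y) (auto simp: cyc_def split: sum.splits prod.splits)
  obtain k where k: "n = Suc k" using assms(1) gr0_implies_Suc by blast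
  obtain m where m: "x = Inr (Inr m)" using rng[of k x] x k by auto
  obtain j r where jr: "m = prod_encode (j, r)" by (metis prod_decode_inverse surj_pair)
  show "\<exists>j\<in>Ch. q j dvd n"
  proof (cases "j \<in> Ch \<and> r < q j")
    case True
    have "(Inr (Inr (prod_encode (j, (r + n) mod q j))) :: ('p,'f) U) = Inr (Inr (prod_encode (j, r)))"
    proof -
      have e1: "(cyc q Ch ^^ n) (Inr (Inr (prod_encode (j, r)))) = (Inr (Inr (prod_encode (j, r))) :: ('p,'f) U)"
        using x m jr by simp
      have e2: "(cyc q Ch ^^ n) (Inr (Inr (prod_encode (j, r)))) = (Inr (Inr (prod_encode (j, (r + n) mod q j))) :: ('p,'f) U)"
        using cyc_on[of j Ch r q n] True by simp
      show ?thesis by (rule trans[OF e2[symmetric] e1])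
    qed
    then have "(r + n) mod q j = r" by simp
    then have "r mod q j = (r + n) mod q j" using True by simp
    then have "q j dvd n" using mod_eq_dvd_iff_nat[of r "r + n" "q j"] by simp
    then show ?thesis using True by blast
  next
    case False
    have e1: "(cyc q Ch ^^ n) (Inr (Inr (prod_encode (j, r)))) = (Inr (Inr (prod_encode (j, r))) :: ('p,'f) U)"
      using x m jr by simp
    have e2: "(cyc q Ch ^^ n) (Inr (Inr (prod_encode (j, r)))) = (Inr (Inr (prod_encode (j, r + n))) :: ('p,'f) U)"
      using cyc_off[of j Ch r q n] False by simp
    have "(Inr (Inr (prod_encode (j, r + n))) :: ('p,'f) U) = Inr (Inr (prod_encode (j, r)))"
      by (rule trans[OF e2[symmetric] e1])
    then show ?thesis using assms(1) by simp
  qed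
next
  assume "\<exists>j\<in>Ch. q j dvd n"
  then obtain j where j: "j \<in> Ch" "q j dvd n" by blast
  have "(cyc q Ch ^^ n) (Inr (Inr (prod_encode (j, 0)))) = Inr (Inr (prod_encode (j, 0)))"
    using cyc_on[of j Ch 0 q n] j assms(2) by simp
  then show "\<exists>x::('p,'f) U. (cyc q Ch ^^ n) x = x" by blast
qed

lemma cycle_case:
  fixes P :: "'p set" and F :: "'f set" and parr :: "'p \<Rightarrow> nat" and farr :: "'f \<Rightarrow> nat"
    and A :: "nat \<Rightarrow> nat \<Rightarrow> ('p,'f) fm"
  assumes wfA: "\<And>x y. wf_fm P F parr farr (A x y)"
    and fvA: "\<And>x y. fv (A x y) \<subseteq> {x, y}"
    and satA: "\<And>(g :: ('p,'f) U \<Rightarrow> ('p,'f) U) e x y. sat \<lparr>univ = UNIV, preds = (\<lambda>_ xs. g (hd xs) = last xs), funs = (\<lambda>_ xs. g (hd xs))\<rparr> e (A x y)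
                 \<longleftrightarrow> g (e x) = e y"
  shows "RS_ge P F parr farr (T_inf P F parr farr) (\<alpha>::'o::wellorder)"
proof -
  obtain q :: "nat \<Rightarrow> nat" where q: "inj q" "range q \<subseteq> {p. prime p}"
    using infinite_countable_subset[OF primes_infinite] by blast
  have qpos: "\<forall>j. q j > 0" using q(2) prime_gt_0_nat by blast
  define \<psi> :: "nat \<Rightarrow> ('p,'f) fm" where "\<psi> i = Ex 0 (G A (q i) 0)" for i
  show ?thesis
  proof (rule rs_inf)
    show "\<forall>i. sentence P F parr farr (\<psi> i)"
    proof
      fix i
      have "fv (G A (q i) 0) \<subseteq> {0}" using G_fv[OF fvA, of "q i" 0] by simp
      then have "fv (\<psi> i) = {}" unfolding \<psi>_def by auto
      then show "sentence P F parr farr (\<psi> i)" unfolding sentence_def \<psi>_def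
        using G_wf[OF wfA] by simp
    qed
    fix L :: "bool list"
    define Ch where "Ch = {j. j < length L \<and> L!j}"
    define M :: "(('p,'f) U,'p,'f) struc" where
      "M = \<lparr>univ = UNIV, preds = (\<lambda>_ xs. cyc q Ch (hd xs) = last xs), funs = (\<lambda>_ xs. cyc q Ch (hd xs))\<rparr>"
    have uM: "univ M = UNIV" by (simp add: M_def)
    have "models M (\<psi> i) = L!i" if "i < length L" for i
    proof -
      have satM: "sat M e (A x y) \<longleftrightarrow> cyc q Ch (e x) = e y" for e x y
        unfolding M_def by (rule satA)
      have GS: "sat M e (G A m cur) \<longleftrightarrow> (cyc q Ch ^^ m) (e cur) = e 0" for e m cur
        by (rule G_sat[of M A "cyc q Ch", OF satM uM])
      have "models M (\<psi> i) \<longleftrightarrow> (\<forall>e::nat \<Rightarrow> ('p,'f) U. \<exists>a::('p,'f) U. (cyc q Ch ^^ q i) a = a)"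
        unfolding models_def \<psi>_def by (simp only: sat.simps GS uM) simp
      also have "\<dots> \<longleftrightarrow> (\<exists>j\<in>Ch. q j dvd q i)" 
      proof -
        have "(\<exists>a::('p,'f) U. (cyc q Ch ^^ q i) a = a) \<longleftrightarrow> (\<exists>j\<in>Ch. q j dvd q i)"
          by (rule cyc_periodic[OF _ qpos]) (use qpos in blast)
        then show ?thesis by simp
      qed
      also have "\<dots> \<longleftrightarrow> i \<in> Ch"
      proof
        assume "\<exists>j\<in>Ch. q j dvd q i"
        then obtain j where "j \<in> Ch" "q j dvd q i" by blast
        then have "q j = q i" using q(2) primes_dvd_imp_eq by blast
        then show "i \<in> Ch" using \<open>j \<in> Ch\<close> q(1) by (metis injD)
      qed (use dvd_refl in blast)
      also have "\<dots> \<longleftrightarrow> L!i" using that by (simp add: Ch_def)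
      finally show ?thesis .
    qed
    then show "\<exists>M::(('p,'f) U,'p,'f) struc. is_struc F farr M \<and> infinite (univ M) \<and>
                  (\<forall>i<length L. models M (\<psi> i) = L!i)"
    proof (intro exI[of _ M] conjI)
      show "is_struc F farr M" unfolding M_def by (rule is_struc_UNIV)
      show "infinite (univ M)" using infinite_U by (simp add: M_def)
    qed auto
  qed
qed

lemma case_c:
  fixes P :: "'p set" and F :: "'f set" and parr :: "'p \<Rightarrow> nat" and farr :: "'f \<Rightarrow> nat"
  assumes "p \<in> P" "parr p \<ge> 2"
  shows "RS_ge P F parr farr (T_inf P F parr farr) (\<alpha>::'o::wellorder)"
proof (rule cycle_case)
  let ?A = "\<lambda>x y. Rel (Inl p) (replicate (parr p - 1) x @ [y]) :: ('p,'f) fm"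
  show "wf_fm P F parr farr (?A x y)" for x y using assms by simp
  show "fv (?A x y) \<subseteq> {x, y}" for x y by auto
  show "sat \<lparr>univ = UNIV, preds = (\<lambda>_ xs. g (hd xs) = last xs), funs = (\<lambda>_ xs. g (hd xs))\<rparr> e (?A x y)
                 \<longleftrightarrow> g (e x) = e y" for g :: "('p,'f) U \<Rightarrow> ('p,'f) U" and e x y
  proof -
    have "parr p - 1 = Suc (parr p - 2)" using assms(2) by arith
    then show ?thesis by simp
  qed
qed

lemma case_d:
  fixes P :: "'p set" and F :: "'f set" and parr :: "'p \<Rightarrow> nat" and farr :: "'f \<Rightarrow> nat"
  assumes "f \<in> F" "farr f \<ge> 1"
  shows "RS_ge P F parr farr (T_inf P F parr farr) (\<alpha>::'o::wellorder)"
proof (rule cycle_case)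
  let ?A = "\<lambda>x y. Rel (Inr f) (replicate (farr f) x @ [y]) :: ('p,'f) fm"
  show "wf_fm P F parr farr (?A x y)" for x y using assms by simp
  show "fv (?A x y) \<subseteq> {x, y}" for x y by auto
  show "sat \<lparr>univ = UNIV, preds = (\<lambda>_ xs. g (hd xs) = last xs), funs = (\<lambda>_ xs. g (hd xs))\<rparr> e (?A x y)
                 \<longleftrightarrow> g (e x) = e y" for g :: "('p,'f) U \<Rightarrow> ('p,'f) U" and e x y
  proof -
    have "farr f = Suc (farr f - 1)" using assms(2) by arith
    then show ?thesis by (simp add: butlast_append)
  qed
qed

definition etyp :: "'p set \<Rightarrow> 'f set \<Rightarrow> ('u,'p,'f) struc \<Rightarrow> 'u \<Rightarrow> 'p set \<times> 'f set" where
  "etyp P F M a = ({p\<in>P. preds M p [a]}, {f\<in>F. funs M f [] = a})"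

definition ecnt :: "'a set \<Rightarrow> enat" where
  "ecnt S = (if finite S then enat (card S) else \<infinity>)"

definition cls :: "'p set \<Rightarrow> 'f set \<Rightarrow> ('u,'p,'f) struc \<Rightarrow> nat set \<Rightarrow> (nat \<Rightarrow> 'u) \<Rightarrow> 'p set \<times> 'f set \<Rightarrow> 'u set" where
  "cls P F M V e \<tau> = {a\<in>univ M. etyp P F M a = \<tau> \<and> a \<notin> e ` V}"

definition sim :: "'p set \<Rightarrow> 'f set \<Rightarrow> nat \<Rightarrow> nat set \<Rightarrow> ('u,'p,'f) struc \<Rightarrow> (nat \<Rightarrow> 'u)
    \<Rightarrow> ('u,'p,'f) struc \<Rightarrow> (nat \<Rightarrow> 'u) \<Rightarrow> bool" where
  "sim P F q V M e M' e' \<longleftrightarrow> {p\<in>P. preds M p []} = {p\<in>P. preds M' p []} \<and>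
     (\<forall>x\<in>V. etyp P F M (e x) = etyp P F M' (e' x)) \<and>
     (\<forall>x\<in>V. \<forall>y\<in>V. (e x = e y) = (e' x = e' y)) \<and>
     (\<forall>\<tau>. min (enat q) (ecnt (cls P F M V e \<tau>)) = min (enat q) (ecnt (cls P F M' V e' \<tau>)))"

lemma min_eSuc:
  assumes "min (enat q) a = min (enat q) b"
  shows "min (enat q) (eSuc a) = min (enat q) (eSuc b)"
  using assms by (cases a; cases b) (auto simp: eSuc_enat min_def split: if_splits)

lemma min_Suc_down:
  assumes "min (enat (Suc q)) a = min (enat (Suc q)) b"
  shows "min (enat q) a = min (enat q) b"
  using assms by (cases a; cases b) (auto simp: min_def split: if_splits)

lemma min_eSuc_down:
  assumes "min (enat (Suc q)) (eSuc a) = min (enat (Suc q)) (eSuc b)"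
  shows "min (enat q) a = min (enat q) b"
  using assms by (cases a; cases b) (auto simp: eSuc_enat min_def split: if_splits)

lemma min_ne0: "c \<noteq> 0 \<Longrightarrow> min (enat (Suc q)) c \<noteq> 0"
  by (cases c) (simp_all add: min_def enat_0_iff)

lemma ecnt_insert: "a \<notin> S \<Longrightarrow> ecnt (insert a S) = eSuc (ecnt S)"
  by (auto simp: ecnt_def eSuc_enat)

lemma ecnt_empty_iff: "ecnt S = 0 \<longleftrightarrow> S = {}"
  by (auto simp: ecnt_def zero_enat_def)

lemma ecnt_remove: "a \<in> S \<Longrightarrow> ecnt S = eSuc (ecnt (S - {a}))"
  using ecnt_insert[of a "S - {a}"] by (simp add: insert_absorb)

lemma sim_sym: "sim P F q V M e M' e' \<Longrightarrow> sim P F q V M' e' M e"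
  unfolding sim_def by auto

lemma sim_remove:
  assumes s: "sim P F q V M e M' e'" and r: "range e \<subseteq> univ M" "range e' \<subseteq> univ M'"
  shows "sim P F q (V - {x}) M e M' e'"
proof (cases "x \<in> V")
  case False
  then show ?thesis using s by simp
next
  case xV: True
  have A: "{p\<in>P. preds M p []} = {p\<in>P. preds M' p []}"
    and B: "\<forall>x\<in>V. etyp P F M (e x) = etyp P F M' (e' x)"
    and C: "\<forall>x\<in>V. \<forall>y\<in>V. (e x = e y) = (e' x = e' y)"
    and D: "\<forall>\<tau>. min (enat q) (ecnt (cls P F M V e \<tau>)) = min (enat q) (ecnt (cls P F M' V e' \<tau>))"
    using s unfolding sim_def by auto
  have D': "min (enat q) (ecnt (cls P F M (V - {x}) e \<tau>)) = min (enat q) (ecnt (cls P F M' (V - {x}) e' \<tau>))" for \<tau>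
  proof (cases "e x \<in> e ` (V - {x})")
    case True
    then obtain y where y: "y \<in> V - {x}" "e x = e y" by auto
    then have "e' x = e' y" using C xV by auto
    then have "e' x \<in> e' ` (V - {x})" using y by auto
    then have "e' ` (V - {x}) = e' ` V" using xV by (metis insert_Diff image_insert insert_absorb)
    moreover have "e ` (V - {x}) = e ` V" using True xV by (metis insert_Diff image_insert insert_absorb)
    ultimately have "cls P F M (V - {x}) e \<tau> = cls P F M V e \<tau>" "cls P F M' (V - {x}) e' \<tau> = cls P F M' V e' \<tau>"
      unfolding cls_def by simp_all
    then show ?thesis using spec[OF D, of \<tau>] by simp
  next
    case False
    have F': "e' x \<notin> e' ` (V - {x})"
    proof
      assume "e' x \<in> e' ` (V - {x})"
      then obtain y where y: "y \<in> V - {x}" "e' x = e' y" by auto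
      then have "e x = e y" using C xV by auto
      then show False using False y by auto
    qed
    have ex: "e x \<in> univ M" "e' x \<in> univ M'" using r by auto
    have c1: "cls P F M (V - {x}) e \<tau> = (if etyp P F M (e x) = \<tau> then insert (e x) (cls P F M V e \<tau>) else cls P F M V e \<tau>)"
      using False xV ex unfolding cls_def by (auto; metis Diff_iff image_eqI insertE insert_Diff)
    have c2: "cls P F M' (V - {x}) e' \<tau> = (if etyp P F M' (e' x) = \<tau> then insert (e' x) (cls P F M' V e' \<tau>) else cls P F M' V e' \<tau>)"
      using F' xV ex unfolding cls_def by (auto; metis Diff_iff image_eqI insertE insert_Diff)
    have n1: "e x \<notin> cls P F M V e \<tau>" "e' x \<notin> cls P F M' V e' \<tau>" using xV unfolding cls_def by auto
    have Dt: "min (enat q) (ecnt (cls P F M V e \<tau>)) = min (enat q) (ecnt (cls P F M' V e' \<tau>))"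
      using spec[OF D, of \<tau>] .
    have ty: "etyp P F M (e x) = etyp P F M' (e' x)" using B xV by blast
    show ?thesis
    proof (cases "etyp P F M (e x) = \<tau>")
      case True
      then have "etyp P F M' (e' x) = \<tau>" using ty by simp
      then show ?thesis using True c1 c2 ecnt_insert[OF n1(1)] ecnt_insert[OF n1(2)] min_eSuc[OF Dt] by simp
    next
      case False
      then have "etyp P F M' (e' x) \<noteq> \<tau>" using ty by simp
      then show ?thesis using False c1 c2 Dt by simp
    qed
  qed
  show ?thesis unfolding sim_def using A B C D' by auto
qed

lemma sim_add:
  fixes M M' :: "('u,'p,'f) struc"
  assumes s: "sim P F (Suc q) V M e M' e'" and r: "range e \<subseteq> univ M" "range e' \<subseteq> univ M'"
    and xV: "x \<notin> V" and a: "a \<in> univ M"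
  shows "\<exists>a'\<in>univ M'. sim P F q (insert x V) M (e(x:=a)) M' (e'(x:=a'))"
proof -
  have A: "{p\<in>P. preds M p []} = {p\<in>P. preds M' p []}"
    and B: "\<forall>x\<in>V. etyp P F M (e x) = etyp P F M' (e' x)"
    and C: "\<forall>x\<in>V. \<forall>y\<in>V. (e x = e y) = (e' x = e' y)"
    and D: "\<forall>\<tau>. min (enat (Suc q)) (ecnt (cls P F M V e \<tau>)) = min (enat (Suc q)) (ecnt (cls P F M' V e' \<tau>))"
    using s unfolding sim_def by auto
  have eqV: "(e(x:=b)) ` V = e ` V" for b and e :: "nat \<Rightarrow> 'u" using xV by auto
  show ?thesis
  proof (cases "a \<in> e ` V")
    case True
    then obtain y where y: "y \<in> V" "a = e y" by auto
    have img1: "(e(x:=a)) ` insert x V = e ` V" using True by (simp only: image_insert fun_upd_same eqV insert_absorb)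
    have "e' y \<in> e' ` V" using y by auto
    then have img2: "(e'(x:=e' y)) ` insert x V = e' ` V" by (simp only: image_insert fun_upd_same eqV insert_absorb)
    have "sim P F q (insert x V) M (e(x:=a)) M' (e'(x:=e' y))"
      unfolding sim_def
    proof (intro conjI)
      show "{p\<in>P. preds M p []} = {p\<in>P. preds M' p []}" by (rule A)
      show "\<forall>z\<in>insert x V. etyp P F M ((e(x:=a)) z) = etyp P F M' ((e'(x:=e' y)) z)"
      proof
        fix z assume z: "z \<in> insert x V"
        show "etyp P F M ((e(x:=a)) z) = etyp P F M' ((e'(x:=e' y)) z)"
        proof (cases "z = x")
          case True
          then show ?thesis using B y by simp
        next
          case False
          then show ?thesis using B z by simp
        qed
      qed
      show "\<forall>z\<in>insert x V. \<forall>w\<in>insert x V. ((e(x:=a)) z = (e(x:=a)) w) = ((e'(x:=e' y)) z = (e'(x:=e' y)) w)"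
      proof (intro ballI)
        fix z w assume zw: "z \<in> insert x V" "w \<in> insert x V"
        have h: "(e(x:=a)) u = e (if u = x then y else u) \<and> (e'(x:=e' y)) u = e' (if u = x then y else u)" for u
          using y by auto
        have "(if z = x then y else z) \<in> V" "(if w = x then y else w) \<in> V" using zw y by auto
        then show "((e(x:=a)) z = (e(x:=a)) w) = ((e'(x:=e' y)) z = (e'(x:=e' y)) w)"
        proof -
          have "(e(x:=a)) z = e (if z = x then y else z)" "(e(x:=a)) w = e (if w = x then y else w)"
               "(e'(x:=e' y)) z = e' (if z = x then y else z)" "(e'(x:=e' y)) w = e' (if w = x then y else w)"
            using h by blast+
          then show ?thesis using C \<open>(if z = x then y else z) \<in> V\<close> \<open>(if w = x then y else w) \<in> V\<close>
            by (simp only:)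
        qed
      qed
      show "\<forall>\<tau>. min (enat q) (ecnt (cls P F M (insert x V) (e(x:=a)) \<tau>)) =
               min (enat q) (ecnt (cls P F M' (insert x V) (e'(x:=e' y)) \<tau>))"
      proof
        fix \<tau>
        have "cls P F M (insert x V) (e(x:=a)) \<tau> = cls P F M V e \<tau>"
             "cls P F M' (insert x V) (e'(x:=e' y)) \<tau> = cls P F M' V e' \<tau>"
          unfolding cls_def img1 img2 by simp_all
        then show "min (enat q) (ecnt (cls P F M (insert x V) (e(x:=a)) \<tau>)) =
               min (enat q) (ecnt (cls P F M' (insert x V) (e'(x:=e' y)) \<tau>))"
          using min_Suc_down[OF spec[OF D, of \<tau>]] by simp
      qed
    qed
    moreover have "e' y \<in> univ M'" using r by auto
    ultimately show ?thesis by blast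
  next
    case False
    define \<tau>0 where "\<tau>0 = etyp P F M a"
    have "a \<in> cls P F M V e \<tau>0" using a False unfolding cls_def \<tau>0_def by auto
    then have "cls P F M V e \<tau>0 \<noteq> {}" by blast
    then have "ecnt (cls P F M V e \<tau>0) \<noteq> 0" by (simp add: ecnt_empty_iff)
    then have ne0: "min (enat (Suc q)) (ecnt (cls P F M V e \<tau>0)) \<noteq> 0"
      by (rule min_ne0)
    have "ecnt (cls P F M' V e' \<tau>0) \<noteq> 0"
    proof
      assume "ecnt (cls P F M' V e' \<tau>0) = 0"
      then have "min (enat (Suc q)) (ecnt (cls P F M V e \<tau>0)) = 0" using spec[OF D, of \<tau>0] by simp
      then show False using ne0 by simp
    qed
    then have "cls P F M' V e' \<tau>0 \<noteq> {}" by (simp add: ecnt_empty_iff)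
    then obtain a' where a': "a' \<in> cls P F M' V e' \<tau>0" by blast
    have a'u: "a' \<in> univ M'" "etyp P F M' a' = \<tau>0" "a' \<notin> e' ` V" using a' unfolding cls_def by auto
    have img1: "(e(x:=a)) ` insert x V = insert a (e ` V)" by (simp only: image_insert fun_upd_same eqV)
    have img2: "(e'(x:=a')) ` insert x V = insert a' (e' ` V)" by (simp only: image_insert fun_upd_same eqV)
    have "sim P F q (insert x V) M (e(x:=a)) M' (e'(x:=a'))"
      unfolding sim_def
    proof (intro conjI)
      show "{p\<in>P. preds M p []} = {p\<in>P. preds M' p []}" by (rule A)
      show "\<forall>z\<in>insert x V. etyp P F M ((e(x:=a)) z) = etyp P F M' ((e'(x:=a')) z)"
      proof
        fix z assume z: "z \<in> insert x V"
        show "etyp P F M ((e(x:=a)) z) = etyp P F M' ((e'(x:=a')) z)"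
        proof (cases "z = x")
          case True
          then show ?thesis using a'u(2) \<tau>0_def by simp
        next
          case False
          then show ?thesis using B z by simp
        qed
      qed
      show "\<forall>z\<in>insert x V. \<forall>w\<in>insert x V. ((e(x:=a)) z = (e(x:=a)) w) = ((e'(x:=a')) z = (e'(x:=a')) w)"
      proof (intro ballI)
        fix z w assume z: "z \<in> insert x V" and w: "w \<in> insert x V"
        show "((e(x:=a)) z = (e(x:=a)) w) = ((e'(x:=a')) z = (e'(x:=a')) w)"
        proof (cases "z = x"; cases "w = x")
          assume "z = x" "w = x" then show ?thesis by simp
        next
          assume "z = x" "w \<noteq> x"
          then have "w \<in> V" using w by simp
          then have "a \<noteq> e w" "a' \<noteq> e' w" using False a'u(3) by auto
          then show ?thesis using \<open>z = x\<close> \<open>w \<noteq> x\<close> by simp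
        next
          assume "z \<noteq> x" "w = x"
          then have "z \<in> V" using z by simp
          then have "a \<noteq> e z" "a' \<noteq> e' z" using False a'u(3) by auto
          then show ?thesis using \<open>z \<noteq> x\<close> \<open>w = x\<close> by auto
        next
          assume "z \<noteq> x" "w \<noteq> x"
          then have "z \<in> V" "w \<in> V" using z w by auto
          then show ?thesis using C \<open>z \<noteq> x\<close> \<open>w \<noteq> x\<close> by simp
        qed
      qed
      show "\<forall>\<tau>. min (enat q) (ecnt (cls P F M (insert x V) (e(x:=a)) \<tau>)) =
               min (enat q) (ecnt (cls P F M' (insert x V) (e'(x:=a')) \<tau>))"
      proof
        fix \<tau>
        have k1: "cls P F M (insert x V) (e(x:=a)) \<tau> = cls P F M V e \<tau> - {a}"
          unfolding cls_def img1 by auto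
        have k2: "cls P F M' (insert x V) (e'(x:=a')) \<tau> = cls P F M' V e' \<tau> - {a'}"
          unfolding cls_def img2 by auto
        show "min (enat q) (ecnt (cls P F M (insert x V) (e(x:=a)) \<tau>)) =
               min (enat q) (ecnt (cls P F M' (insert x V) (e'(x:=a')) \<tau>))"
        proof (cases "\<tau> = \<tau>0")
          case True
          have r1: "ecnt (cls P F M V e \<tau>) = eSuc (ecnt (cls P F M V e \<tau> - {a}))"
            by (rule ecnt_remove) (use \<open>a \<in> cls P F M V e \<tau>0\<close> True in simp)
          have r2: "ecnt (cls P F M' V e' \<tau>) = eSuc (ecnt (cls P F M' V e' \<tau> - {a'}))"
            by (rule ecnt_remove) (use a' True in simp)
          have "min (enat (Suc q)) (eSuc (ecnt (cls P F M V e \<tau> - {a}))) =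
                min (enat (Suc q)) (eSuc (ecnt (cls P F M' V e' \<tau> - {a'})))"
            using spec[OF D, of \<tau>] unfolding r1 r2 .
          then show ?thesis unfolding k1 k2 by (rule min_eSuc_down)
        next
          case False
          have "a \<notin> cls P F M V e \<tau>" "a' \<notin> cls P F M' V e' \<tau>"
            using False a'u(2) \<tau>0_def unfolding cls_def by auto
          then have "cls P F M V e \<tau> - {a} = cls P F M V e \<tau>" "cls P F M' V e' \<tau> - {a'} = cls P F M' V e' \<tau>"
            by auto
          then show ?thesis unfolding k1 k2 using min_Suc_down[OF spec[OF D, of \<tau>]] by simp
        qed
      qed
    qed
    then show ?thesis using a'u(1) by blast
  qed
qed

fun qr :: "('p,'f) fm \<Rightarrow> nat" where
  "qr (Eq x y) = 0"
| "qr (Rel s xs) = 0"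
| "qr (Neg \<phi>) = qr \<phi>"
| "qr (Conj \<phi> \<psi>) = max (qr \<phi>) (qr \<psi>)"
| "qr (Ex x \<phi>) = Suc (qr \<phi>)"

lemma sim_sat:
  fixes M M' :: "('u,'p,'f) struc" and P :: "'p set" and F :: "'f set"
  assumes ar: "\<forall>p\<in>P. parr p < 2" "\<forall>f\<in>F. farr f = 0"
  shows "wf_fm P F parr farr \<phi> \<Longrightarrow> fv \<phi> \<subseteq> V \<Longrightarrow> qr \<phi> \<le> q \<Longrightarrow> sim P F q V M e M' e' \<Longrightarrow>
         range e \<subseteq> univ M \<Longrightarrow> range e' \<subseteq> univ M' \<Longrightarrow> sat M e \<phi> = sat M' e' \<phi>"
proof (induction \<phi> arbitrary: q V M e M' e')
  case (Eq x y)
  then show ?case by (simp add: sim_def)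
next
  case (Rel s xs)
  show ?case
  proof (cases s)
    case (Inl p)
    have p: "p \<in> P" "length xs = parr p" using Rel.prems(1) Inl by auto
    have "length xs < 2" using p ar by auto
    then consider "xs = []" | y where "xs = [y]"
      by (metis One_nat_def length_0_conv length_Suc_conv less_2_cases)
    then show ?thesis
    proof cases
      case 1
      then show ?thesis using Rel.prems(4) p Inl unfolding sim_def by auto
    next
      case 2
      then have "y \<in> V" using Rel.prems(2) by auto
      then have "etyp P F M (e y) = etyp P F M' (e' y)" using Rel.prems(4) unfolding sim_def by auto
      then show ?thesis using 2 p Inl unfolding etyp_def by auto
    qed
  next
    case (Inr f)
    have f: "f \<in> F" "length xs = Suc 0" using Rel.prems(1) Inr ar by auto
    then obtain y where y: "xs = [y]" by (metis length_0_conv length_Suc_conv)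
    then have "y \<in> V" using Rel.prems(2) by auto
    then have "etyp P F M (e y) = etyp P F M' (e' y)" using Rel.prems(4) unfolding sim_def by auto
    then show ?thesis using y f Inr unfolding etyp_def by auto
  qed
next
  case (Neg \<phi>)
  then show ?case by simp
next
  case (Conj \<phi>1 \<phi>2)
  have "sat M e \<phi>1 = sat M' e' \<phi>1"
    by (rule Conj.IH(1)) (use Conj.prems in auto)
  moreover have "sat M e \<phi>2 = sat M' e' \<phi>2"
    by (rule Conj.IH(2)) (use Conj.prems in auto)
  ultimately show ?case by simp
next
  case (Ex x \<phi>)
  obtain q' where q': "q = Suc q'" "qr \<phi> \<le> q'" using Ex.prems(3) by (cases q) auto
  have dir: "sat M2 e2 (Ex x \<phi>) \<Longrightarrow> sat M2' e2' (Ex x \<phi>)"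
    if s2: "sim P F q V M2 e2 M2' e2'" and r2: "range e2 \<subseteq> univ M2" "range e2' \<subseteq> univ M2'"
    for M2 M2' :: "('u,'p,'f) struc" and e2 e2'
  proof -
    assume "sat M2 e2 (Ex x \<phi>)"
    then obtain a where a: "a \<in> univ M2" "sat M2 (e2(x:=a)) \<phi>" by auto
    have s3: "sim P F (Suc q') (V - {x}) M2 e2 M2' e2'" using sim_remove[OF s2 r2] q' by simp
    obtain a' where a': "a' \<in> univ M2'" "sim P F q' (insert x (V - {x})) M2 (e2(x:=a)) M2' (e2'(x:=a'))"
      using sim_add[OF s3 r2 _ a(1), of x] by auto
    have "sat M2 (e2(x:=a)) \<phi> = sat M2' (e2'(x:=a')) \<phi>"
    proof (rule Ex.IH)
      show "wf_fm P F parr farr \<phi>" using Ex.prems(1) by simp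
      show "fv \<phi> \<subseteq> insert x (V - {x})" using Ex.prems(2) by auto
      show "qr \<phi> \<le> q'" by (rule q'(2))
      show "sim P F q' (insert x (V - {x})) M2 (e2(x:=a)) M2' (e2'(x:=a'))" by (rule a'(2))
      show "range (e2(x:=a)) \<subseteq> univ M2" using r2 a by auto
      show "range (e2'(x:=a')) \<subseteq> univ M2'" using r2 a' by auto
    qed
    then show "sat M2' e2' (Ex x \<phi>)" using a a' by auto
  qed
  show ?case
    using dir[OF Ex.prems(4-6)] dir[OF sim_sym[OF Ex.prems(4)] Ex.prems(6) Ex.prems(5)] by blast
qed

definition invt :: "'p set \<Rightarrow> 'f set \<Rightarrow> ('u,'p,'f) struc \<Rightarrow> 'p set \<times> ('p set \<times> 'f set \<Rightarrow> enat)" where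
  "invt P F M = ({p\<in>P. preds M p []}, \<lambda>\<tau>. ecnt {a\<in>univ M. etyp P F M a = \<tau>})"

definition trunc :: "nat \<Rightarrow> 'z \<times> ('t \<Rightarrow> enat) \<Rightarrow> 'z \<times> ('t \<Rightarrow> enat)" where
  "trunc q v = (fst v, \<lambda>\<tau>. min (enat q) (snd v \<tau>))"

lemma sent_eq:
  fixes M M' :: "('u,'p,'f) struc"
  assumes ar: "\<forall>p\<in>P. parr p < 2" "\<forall>f\<in>F. farr f = 0"
    and sent: "sentence P F parr farr \<phi>" and q: "qr \<phi> \<le> q"
    and tr: "trunc q (invt P F M) = trunc q (invt P F M')"
    and ne: "univ M \<noteq> {}" "univ M' \<noteq> {}"
  shows "models M \<phi> \<longleftrightarrow> models M' \<phi>"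
proof -
  obtain a where a: "a \<in> univ M" using ne by auto
  obtain a' where a': "a' \<in> univ M'" using ne by auto
  have s: "sim P F q {} M (\<lambda>_. a) M' (\<lambda>_. a')"
    using tr unfolding sim_def trunc_def invt_def cls_def by (auto simp: fun_eq_iff)
  have "sat M (\<lambda>_. a) \<phi> = sat M' (\<lambda>_. a') \<phi>"
    using sim_sat[OF ar, of \<phi> "{}" q M "\<lambda>_. a" M' "\<lambda>_. a'"] sent q s a a' by (auto simp: sentence_def)
  moreover have "models M \<phi> \<longleftrightarrow> sat M (\<lambda>_. a) \<phi>"
    using models_sentence[of \<phi> M] sent ne a sat_fv_agree[of \<phi>] by (auto simp: sentence_def models_def)
  moreover have "models M' \<phi> \<longleftrightarrow> sat M' (\<lambda>_. a') \<phi>"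
    using models_sentence[of \<phi> M'] sent ne a' sat_fv_agree[of \<phi>] by (auto simp: sentence_def models_def)
  ultimately show ?thesis by simp
qed

lemma pigeon_inf:
  assumes "finite Zs" "infinite B" "\<forall>b\<in>B. f b \<in> Zs"
  shows "\<exists>z\<in>Zs. infinite {b\<in>B. f b = z}"
proof (rule ccontr)
  assume "\<not> ?thesis"
  then have "finite (\<Union>z\<in>Zs. {b\<in>B. f b = z})" using assms(1) by auto
  moreover have "B = (\<Union>z\<in>Zs. {b\<in>B. f b = z})" using assms(3) by auto
  ultimately show False using assms(2) by simp
qed

lemma accum_step:
  fixes B0 :: "('z \<times> ('t \<Rightarrow> enat)) set"
  assumes "finite J" "infinite B0"
  shows "\<exists>B'\<subseteq>B0. infinite B' \<and> (\<exists>L\<subseteq>J. \<exists>xv. (\<forall>\<tau>\<in>J-L. \<forall>b\<in>B'. snd b \<tau> = xv \<tau>) \<and>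
           (\<forall>\<tau>\<in>L. \<forall>v. finite {b\<in>B'. snd b \<tau> = v}))"
  using assms(1)
proof (induction J rule: finite_induct)
  case empty
  then show ?case using assms(2) by blast
next
  case (insert \<tau> J)
  then obtain B' L xv where B': "B' \<subseteq> B0" "infinite B'" "L \<subseteq> J"
    "\<forall>\<tau>\<in>J-L. \<forall>b\<in>B'. snd b \<tau> = xv \<tau>" "\<forall>\<tau>\<in>L. \<forall>v. finite {b\<in>B'. snd b \<tau> = v}" by blast
  show ?case
  proof (cases "\<exists>v. infinite {b\<in>B'. snd b \<tau> = v}")
    case True
    then obtain v where v: "infinite {b\<in>B'. snd b \<tau> = v}" by blast
    let ?B = "{b\<in>B'. snd b \<tau> = v}"
    have "\<forall>\<tau>'\<in>insert \<tau> J - L. \<forall>b\<in>?B. snd b \<tau>' = (xv(\<tau>:=v)) \<tau>'"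
    proof (intro ballI)
      fix \<tau>' b assume t: "\<tau>' \<in> insert \<tau> J - L" and b: "b \<in> ?B"
      show "snd b \<tau>' = (xv(\<tau>:=v)) \<tau>'"
      proof (cases "\<tau>' = \<tau>")
        case True then show ?thesis using b by simp
      next
        case False
        then have "\<tau>' \<in> J - L" "b \<in> B'" using t b by auto
        then show ?thesis using B'(4) False by simp
      qed
    qed
    moreover have "\<forall>\<tau>'\<in>L. \<forall>w. finite {b\<in>?B. snd b \<tau>' = w}"
    proof (intro ballI allI)
      fix \<tau>' w assume "\<tau>' \<in> L"
      then have "finite {b\<in>B'. snd b \<tau>' = w}" using B'(5) by blast
      then show "finite {b\<in>?B. snd b \<tau>' = w}" by (rule finite_subset[rotated]) auto
    qed
    moreover have "?B \<subseteq> B0" using B'(1) by auto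
    moreover have "L \<subseteq> insert \<tau> J" using B'(3) by auto
    ultimately show ?thesis using v by blast
  next
    case False
    have "\<forall>\<tau>'\<in>insert \<tau> J - insert \<tau> L. \<forall>b\<in>B'. snd b \<tau>' = xv \<tau>'" using B'(4) by auto
    moreover have "\<forall>\<tau>'\<in>insert \<tau> L. \<forall>w. finite {b\<in>B'. snd b \<tau>' = w}" using B'(5) False by auto
    moreover have "insert \<tau> L \<subseteq> insert \<tau> J" using B'(3) by auto
    ultimately show ?thesis using B'(1,2) by blast
  qed
qed

lemma accum:
  fixes B :: "('z \<times> ('t \<Rightarrow> enat)) set"
  assumes I: "finite I" and Z: "finite Zs" and infB: "infinite B"
    and hprop: "\<forall>b\<in>B. fst b \<in> Zs \<and> (\<forall>\<tau>. \<tau> \<notin> I \<longrightarrow> snd b \<tau> = 0) \<and> m \<le> card {\<tau>\<in>I. snd b \<tau> = \<infinity>}"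
  shows "\<exists>x. fst x \<in> Zs \<and> (\<forall>\<tau>. \<tau> \<notin> I \<longrightarrow> snd x \<tau> = 0) \<and> Suc m \<le> card {\<tau>\<in>I. snd x \<tau> = \<infinity>} \<and>
             (\<forall>q. \<exists>b\<in>B. trunc q b = trunc q x)"
proof -
  obtain Z0 where Z0: "Z0 \<in> Zs" "infinite {b\<in>B. fst b = Z0}"
    using pigeon_inf[OF Z infB, of fst] hprop by blast
  let ?B0 = "{b\<in>B. fst b = Z0}"
  obtain B' L xv where B': "B' \<subseteq> ?B0" "infinite B'" "L \<subseteq> I"
    "\<forall>\<tau>\<in>I-L. \<forall>b\<in>B'. snd b \<tau> = xv \<tau>" "\<forall>\<tau>\<in>L. \<forall>v. finite {b\<in>B'. snd b \<tau> = v}"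
    using accum_step[OF I Z0(2)] by blast
  define x where "x = (Z0, \<lambda>\<tau>. if \<tau> \<in> L then \<infinity> else if \<tau> \<in> I then xv \<tau> else (0::enat))"
  have bprop: "fst b = Z0" "\<forall>\<tau>. \<tau> \<notin> I \<longrightarrow> snd b \<tau> = 0" "m \<le> card {\<tau>\<in>I. snd b \<tau> = \<infinity>}"
    if "b \<in> B'" for b using that B'(1) hprop by auto
  have Lne: "L \<noteq> {}"
  proof
    assume "L = {}"
    have "b = x" if bB: "b \<in> B'" for b
    proof (rule prod_eqI)
      show "fst b = fst x" using bprop[OF bB] by (simp add: x_def)
      show "snd b = snd x"
      proof
        fix \<tau>
        show "snd b \<tau> = snd x \<tau>"
        proof (cases "\<tau> \<in> I")
          case True
          then have "\<tau> \<in> I - L" using \<open>L = {}\<close> by simp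
          then show ?thesis using B'(4) bB True \<open>L = {}\<close> by (simp add: x_def)
        next
          case False
          then show ?thesis using bprop(2)[OF bB] \<open>L = {}\<close> by (simp add: x_def)
        qed
      qed
    qed
    then have "B' \<subseteq> {x}" by blast
    then show False using B'(2) finite_subset by blast
  qed
  have good: "\<exists>b\<in>B'. (\<forall>\<tau>\<in>L. \<exists>n. snd b \<tau> = enat n \<and> q \<le> n)" for q
  proof -
    define Bad where "Bad = (\<Union>\<tau>\<in>L. \<Union>v\<in>insert \<infinity> (enat ` {..<q}). {b\<in>B'. snd b \<tau> = v})"
    have "finite Bad" unfolding Bad_def using B'(3,5) I finite_subset by blast
    then obtain b where b: "b \<in> B'" "b \<notin> Bad" using B'(2) by (meson finite_subset subsetI)
    have "\<exists>n. snd b \<tau> = enat n \<and> q \<le> n" if "\<tau> \<in> L" for \<tau>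
    proof (cases "snd b \<tau>")
      case (enat n)
      then have "\<not> n < q" using b that unfolding Bad_def by auto
      then show ?thesis using enat by auto
    next
      case infinity
      then show ?thesis using b that unfolding Bad_def by auto
    qed
    then show ?thesis using b by blast
  qed
  have tr: "trunc q b = trunc q x" if bB: "b \<in> B'" and bL: "\<forall>\<tau>\<in>L. \<exists>n. snd b \<tau> = enat n \<and> q \<le> n" for b q
  proof -
    have "min (enat q) (snd b \<tau>) = min (enat q) (snd x \<tau>)" for \<tau>
    proof (cases "\<tau> \<in> L")
      case True
      then obtain n where "snd b \<tau> = enat n" "q \<le> n" using bL by blast
      then show ?thesis using True by (simp add: x_def min_def)
    next
      case False
      show ?thesis
      proof (cases "\<tau> \<in> I")
        case True
        then have "\<tau> \<in> I - L" using False by simp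
        then have "snd b \<tau> = xv \<tau>" using B'(4) bB by blast
        then show ?thesis using False True by (simp add: x_def)
      next
        case F2: False
        then show ?thesis using bprop(2)[OF bB] False by (simp add: x_def)
      qed
    qed
    then show ?thesis using bprop(1)[OF bB] unfolding trunc_def by (simp add: x_def fun_eq_iff)
  qed
  obtain b0 where b0: "b0 \<in> B'" "\<forall>\<tau>\<in>L. \<exists>n. snd b0 \<tau> = enat n \<and> 0 \<le> n" using good[of 0] by blast
  have sub: "{\<tau>\<in>I. snd b0 \<tau> = \<infinity>} \<union> L \<subseteq> {\<tau>\<in>I. snd x \<tau> = \<infinity>}"
  proof
    fix \<tau> assume "\<tau> \<in> {\<tau>\<in>I. snd b0 \<tau> = \<infinity>} \<union> L"
    then show "\<tau> \<in> {\<tau>\<in>I. snd x \<tau> = \<infinity>}"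
      using B'(3,4) b0 by (auto simp: x_def)
  qed
  have disj: "{\<tau>\<in>I. snd b0 \<tau> = \<infinity>} \<inter> L = {}" using b0 by auto
  have "card ({\<tau>\<in>I. snd b0 \<tau> = \<infinity>} \<union> L) = card {\<tau>\<in>I. snd b0 \<tau> = \<infinity>} + card L"
    using disj I B'(3) finite_subset by (intro card_Un_disjoint) auto
  moreover have "card L \<ge> 1" using Lne B'(3) I finite_subset by (metis One_nat_def Suc_leI card_gt_0_iff)
  moreover have "card ({\<tau>\<in>I. snd b0 \<tau> = \<infinity>} \<union> L) \<le> card {\<tau>\<in>I. snd x \<tau> = \<infinity>}"
    using sub I by (intro card_mono) auto
  ultimately have "Suc m \<le> card {\<tau>\<in>I. snd x \<tau> = \<infinity>}" using bprop(3)[OF b0(1)] by linarith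
  moreover have "\<forall>q. \<exists>b\<in>B. trunc q b = trunc q x"
  proof
    fix q
    obtain b where "b \<in> B'" "\<forall>\<tau>\<in>L. \<exists>n. snd b \<tau> = enat n \<and> q \<le> n" using good by blast
    then show "\<exists>b\<in>B. trunc q b = trunc q x" using tr B'(1) by blast
  qed
  moreover have "fst x \<in> Zs" "\<forall>\<tau>. \<tau> \<notin> I \<longrightarrow> snd x \<tau> = 0" using Z0 B'(3) by (auto simp: x_def)
  ultimately show ?thesis by blast
qed

lemma nat_is_zero: "is_zero (n::nat) \<longleftrightarrow> n = 0"
  unfolding is_zero_def by (metis le0 le_0_eq)

lemma nat_is_succ: "is_succ_of (b::nat) a \<longleftrightarrow> a = Suc b"
  unfolding is_succ_of_def
proof
  assume h: "b < a \<and> (\<forall>\<gamma>. b < \<gamma> \<longrightarrow> a \<le> \<gamma>)"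
  then have "a \<le> Suc b" by simp
  moreover have "Suc b \<le> a" using h by (simp add: Suc_le_eq)
  ultimately show "a = Suc b" by (rule antisym)
next
  assume "a = Suc b"
  then show "b < a \<and> (\<forall>\<gamma>. b < \<gamma> \<longrightarrow> a \<le> \<gamma>)" by (simp add: Suc_le_eq)
qed

lemma RS_one_inf:
  assumes "RS_ge P F parr farr A (Suc 0)"
  shows "infinite A"
  using assms
proof (cases rule: RS_ge.cases)
  case zero then show ?thesis by (simp add: nat_is_zero)
next
  case (one \<beta>) then show ?thesis by simp
next
  case (succ \<beta> \<phi>) then show ?thesis by (simp add: nat_is_zero nat_is_succ)
next
  case limit then show ?thesis using nat_is_succ[of 0 "Suc 0"] by blast
qed

lemma RS_succ_inv:
  assumes "RS_ge P F parr farr A (Suc (Suc k))"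
  shows "\<exists>\<phi>. (\<forall>j::nat. sentence P F parr farr (\<phi> j)) \<and> (\<forall>i j. i \<noteq> j \<longrightarrow> inconsistent P F parr farr (\<phi> i) (\<phi> j))
             \<and> (\<forall>j. RS_ge P F parr farr (restrict_fam A (\<phi> j)) (Suc k))"
  using assms
proof (cases rule: RS_ge.cases)
  case zero then show ?thesis by (simp add: nat_is_zero)
next
  case (one \<beta>) then show ?thesis by (simp add: nat_is_zero nat_is_succ)
next
  case (succ \<beta> \<phi>)
  have "\<beta> = Suc k" using succ(1) nat_is_succ[of \<beta> "Suc (Suc k)"] by simp
  then show ?thesis using succ(3,4,5) by auto
next
  case limit then show ?thesis using nat_is_succ[of "Suc k" "Suc (Suc k)"] by blast
qed

definition Vset :: "'p set \<Rightarrow> 'f set \<Rightarrow> ('p \<Rightarrow> nat) \<Rightarrow> ('f \<Rightarrow> nat) \<Rightarrow> ('p,'f) fm set set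
    \<Rightarrow> ('p set \<times> ('p set \<times> 'f set \<Rightarrow> enat)) set" where
  "Vset P F parr farr A = {invt P F M | M :: (('p,'f) U,'p,'f) struc.
      is_struc F farr M \<and> infinite (univ M) \<and> Th P F parr farr M \<in> A}"

definition clos :: "('z \<times> ('t \<Rightarrow> enat)) set \<Rightarrow> 'z \<times> ('t \<Rightarrow> enat) \<Rightarrow> bool" where
  "clos V x \<longleftrightarrow> (\<forall>q. \<exists>v\<in>V. trunc q v = trunc q x)"

lemma etyp_in: "etyp P F M a \<in> Pow P \<times> Pow F"
  by (auto simp: etyp_def)

lemma invt_props:
  "fst (invt P F M) \<in> Pow P \<and> (\<forall>\<tau>. \<tau> \<notin> Pow P \<times> Pow F \<longrightarrow> snd (invt P F M) \<tau> = 0)"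
proof -
  have e: "{a\<in>univ M. etyp P F M a = \<tau>} = {}" if "\<tau> \<notin> Pow P \<times> Pow F" for \<tau>
    using that etyp_in[of P F M] by blast
  have "snd (invt P F M) \<tau> = 0" if "\<tau> \<notin> Pow P \<times> Pow F" for \<tau>
  proof -
    have "snd (invt P F M) \<tau> = ecnt {a\<in>univ M. etyp P F M a = \<tau>}" by (simp add: invt_def)
    also have "\<dots> = 0" by (subst e[OF that]) (simp add: ecnt_def enat_0)
    finally show ?thesis .
  qed
  moreover have "fst (invt P F M) \<in> Pow P" by (auto simp: invt_def)
  ultimately show ?thesis by blast
qed

lemma invt_kap:
  assumes "finite P" "finite F" "infinite (univ M)"
  shows "1 \<le> card {\<tau>\<in>Pow P \<times> Pow F. snd (invt P F M) \<tau> = \<infinity>}"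
proof -
  have U: "univ M = (\<Union>\<tau>\<in>Pow P \<times> Pow F. {a\<in>univ M. etyp P F M a = \<tau>})"
    using etyp_in[of P F M] by blast
  have fI: "finite (Pow P \<times> Pow F)" using assms by simp
  have "\<exists>\<tau>\<in>Pow P \<times> Pow F. infinite {a\<in>univ M. etyp P F M a = \<tau>}"
  proof (rule ccontr)
    assume "\<not> ?thesis"
    then have "finite (\<Union>\<tau>\<in>Pow P \<times> Pow F. {a\<in>univ M. etyp P F M a = \<tau>})"
      using fI by blast
    then show False using U assms(3) by simp
  qed
  then obtain \<tau> where t: "\<tau> \<in> Pow P \<times> Pow F" "infinite {a\<in>univ M. etyp P F M a = \<tau>}" by blast
  then have "\<tau> \<in> {\<tau>\<in>Pow P \<times> Pow F. snd (invt P F M) \<tau> = \<infinity>}" by (simp add: invt_def ecnt_def)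
  moreover have "finite {\<tau>\<in>Pow P \<times> Pow F. snd (invt P F M) \<tau> = \<infinity>}" using fI by simp
  ultimately have "card {\<tau>\<in>Pow P \<times> Pow F. snd (invt P F M) \<tau> = \<infinity>} > 0"
    using card_gt_0_iff by blast
  then show ?thesis by simp
qed

lemma Th_det:
  fixes M M' :: "(('p,'f) U,'p,'f) struc"
  assumes ar: "\<forall>p\<in>P. parr p < 2" "\<forall>f\<in>F. farr f = 0"
    and "is_struc F farr M" "is_struc F farr M'" "invt P F M = invt P F M'"
  shows "Th P F parr farr M = Th P F parr farr M'"
proof -
  have "models M \<phi> \<longleftrightarrow> models M' \<phi>" if "sentence P F parr farr \<phi>" for \<phi>
    using sent_eq[OF ar that order_refl, of M M'] assms by (simp add: is_struc_def)
  then show ?thesis unfolding Th_def by auto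
qed

lemma claim:
  fixes P :: "'p set" and F :: "'f set"
  assumes fin: "finite P" "finite F" and ar: "\<forall>p\<in>P. parr p < 2" "\<forall>f\<in>F. farr f = 0"
  shows "A \<subseteq> T_inf P F parr farr \<Longrightarrow> RS_ge P F parr farr A (Suc k) \<Longrightarrow>
    \<exists>x. fst x \<in> Pow P \<and> (\<forall>\<tau>. \<tau> \<notin> Pow P \<times> Pow F \<longrightarrow> snd x \<tau> = 0) \<and>
        k + 2 \<le> card {\<tau>\<in>Pow P \<times> Pow F. snd x \<tau> = \<infinity>} \<and> clos (Vset P F parr farr A) x"
proof (induction k arbitrary: A)
  case 0
  have infA: "infinite A" using RS_one_inf[OF 0(2)] .
  let ?V = "Vset P F parr farr A"
  define h where "h v = Th P F parr farr (SOME M :: (('p,'f) U,'p,'f) struc. is_struc F farr M \<and>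
      infinite (univ M) \<and> Th P F parr farr M \<in> A \<and> invt P F M = v)" for v
  have "A \<subseteq> h ` ?V"
  proof
    fix T assume "T \<in> A"
    then obtain M0 :: "(('p,'f) U,'p,'f) struc" where M0: "T = Th P F parr farr M0" "is_struc F farr M0" "infinite (univ M0)"
      using 0(1) unfolding T_inf_def by blast
    let ?M = "SOME M :: (('p,'f) U,'p,'f) struc. is_struc F farr M \<and>
      infinite (univ M) \<and> Th P F parr farr M \<in> A \<and> invt P F M = invt P F M0"
    have "is_struc F farr ?M \<and> infinite (univ ?M) \<and> Th P F parr farr ?M \<in> A \<and> invt P F ?M = invt P F M0"
      by (rule someI[of _ M0]) (use M0 \<open>T \<in> A\<close> in auto)
    then have Mp: "is_struc F farr ?M" "invt P F ?M = invt P F M0" by blast+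
    have "h (invt P F M0) = Th P F parr farr ?M" by (simp add: h_def)
    also have "\<dots> = Th P F parr farr M0" by (rule Th_det[OF ar Mp(1) M0(2) Mp(2)])
    finally have "h (invt P F M0) = T" using M0(1) by simp
    moreover have "invt P F M0 \<in> ?V" unfolding Vset_def using M0 \<open>T \<in> A\<close> by blast
    ultimately show "T \<in> h ` ?V" by blast
  qed
  then have infV: "infinite ?V" using infA finite_surj by blast
  have props: "\<forall>b\<in>?V. fst b \<in> Pow P \<and> (\<forall>\<tau>. \<tau> \<notin> Pow P \<times> Pow F \<longrightarrow> snd b \<tau> = 0) \<and>
      1 \<le> card {\<tau>\<in>Pow P \<times> Pow F. snd b \<tau> = \<infinity>}"
  proof
    fix b assume "b \<in> ?V"
    then obtain M :: "(('p,'f) U,'p,'f) struc" where M: "b = invt P F M" "infinite (univ M)"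
      unfolding Vset_def by blast
    show "fst b \<in> Pow P \<and> (\<forall>\<tau>. \<tau> \<notin> Pow P \<times> Pow F \<longrightarrow> snd b \<tau> = 0) \<and>
      1 \<le> card {\<tau>\<in>Pow P \<times> Pow F. snd b \<tau> = \<infinity>}"
      using invt_props[of P F M] invt_kap[OF fin M(2)] M(1) by simp
  qed
  have fI: "finite (Pow P \<times> Pow F)" "finite (Pow P)" using fin by simp_all
  obtain x where x: "fst x \<in> Pow P" "\<forall>\<tau>. \<tau> \<notin> Pow P \<times> Pow F \<longrightarrow> snd x \<tau> = 0"
    "Suc 1 \<le> card {\<tau>\<in>Pow P \<times> Pow F. snd x \<tau> = \<infinity>}" "\<forall>q. \<exists>b\<in>?V. trunc q b = trunc q x"
    using accum[OF fI infV props] by blast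
  have "0 + 2 \<le> card {\<tau>\<in>Pow P \<times> Pow F. snd x \<tau> = \<infinity>}" using x(3) by simp
  then show ?case unfolding clos_def using x(1,2,4) by blast
next
  case (Suc k)
  obtain \<phi> :: "nat \<Rightarrow> ('p,'f) fm" where \<phi>: "\<forall>j. sentence P F parr farr (\<phi> j)"
    "\<forall>i j. i \<noteq> j \<longrightarrow> inconsistent P F parr farr (\<phi> i) (\<phi> j)"
    "\<forall>j. RS_ge P F parr farr (restrict_fam A (\<phi> j)) (Suc k)"
    using RS_succ_inv[OF Suc.prems(2)] by blast
  have "\<forall>j. \<exists>x. fst x \<in> Pow P \<and> (\<forall>\<tau>. \<tau> \<notin> Pow P \<times> Pow F \<longrightarrow> snd x \<tau> = 0) \<and>
        k + 2 \<le> card {\<tau>\<in>Pow P \<times> Pow F. snd x \<tau> = \<infinity>} \<and> clos (Vset P F parr farr (restrict_fam A (\<phi> j))) x"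
  proof
    fix j
    show "\<exists>x. fst x \<in> Pow P \<and> (\<forall>\<tau>. \<tau> \<notin> Pow P \<times> Pow F \<longrightarrow> snd x \<tau> = 0) \<and>
        k + 2 \<le> card {\<tau>\<in>Pow P \<times> Pow F. snd x \<tau> = \<infinity>} \<and> clos (Vset P F parr farr (restrict_fam A (\<phi> j))) x"
    proof (rule Suc.IH)
      show "restrict_fam A (\<phi> j) \<subseteq> T_inf P F parr farr"
        using Suc.prems(1) unfolding restrict_fam_def by blast
      show "RS_ge P F parr farr (restrict_fam A (\<phi> j)) (Suc k)" using \<phi>(3) by blast
    qed
  qed
  then obtain xs where xs0: "\<forall>j. fst (xs j) \<in> Pow P \<and> (\<forall>\<tau>. \<tau> \<notin> Pow P \<times> Pow F \<longrightarrow> snd (xs j) \<tau> = 0) \<and>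
        k + 2 \<le> card {\<tau>\<in>Pow P \<times> Pow F. snd (xs j) \<tau> = \<infinity>} \<and> clos (Vset P F parr farr (restrict_fam A (\<phi> j))) (xs j)"
    by (rule choice[THEN exE])
  have xs: "\<And>j. fst (xs j) \<in> Pow P" "\<And>j. \<forall>\<tau>. \<tau> \<notin> Pow P \<times> Pow F \<longrightarrow> snd (xs j) \<tau> = 0"
    "\<And>j. k + 2 \<le> card {\<tau>\<in>Pow P \<times> Pow F. snd (xs j) \<tau> = \<infinity>}"
    "\<And>j. clos (Vset P F parr farr (restrict_fam A (\<phi> j))) (xs j)"
    using xs0 by blast+
  have mod_of: "\<exists>M :: (('p,'f) U,'p,'f) struc. is_struc F farr M \<and> models M (\<phi> j) \<and> trunc q (invt P F M) = trunc q (xs j)"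
    for j q
  proof -
    obtain v where v: "v \<in> Vset P F parr farr (restrict_fam A (\<phi> j))" "trunc q v = trunc q (xs j)"
      using xs(4)[of j] unfolding clos_def by blast
    then obtain M :: "(('p,'f) U,'p,'f) struc" where "v = invt P F M" "is_struc F farr M"
      "Th P F parr farr M \<in> restrict_fam A (\<phi> j)"
      unfolding Vset_def by blast
    then show ?thesis using v(2) by (auto simp: restrict_fam_def Th_def)
  qed
  have "inj xs"
  proof (rule injI, rule ccontr)
    fix i j assume eq: "xs i = xs j" and ne: "i \<noteq> j"
    define q where "q = max (qr (\<phi> i)) (qr (\<phi> j))"
    obtain M :: "(('p,'f) U,'p,'f) struc" where M: "is_struc F farr M" "models M (\<phi> i)" "trunc q (invt P F M) = trunc q (xs i)"
      using mod_of by blast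
    obtain M' :: "(('p,'f) U,'p,'f) struc" where M': "is_struc F farr M'" "models M' (\<phi> j)" "trunc q (invt P F M') = trunc q (xs j)"
      using mod_of by blast
    have "models M' (\<phi> i)"
      using sent_eq[OF ar spec[OF \<phi>(1), of i], of q M M'] M M' eq by (simp add: q_def is_struc_def)
    then show False using \<phi>(2) ne M' unfolding inconsistent_def by blast
  qed
  then have "infinite (range xs)" using range_inj_infinite by blast
  moreover have "\<forall>b\<in>range xs. fst b \<in> Pow P \<and> (\<forall>\<tau>. \<tau> \<notin> Pow P \<times> Pow F \<longrightarrow> snd b \<tau> = 0) \<and>
      k + 2 \<le> card {\<tau>\<in>Pow P \<times> Pow F. snd b \<tau> = \<infinity>}" using xs0 by blast
  moreover have fI: "finite (Pow P \<times> Pow F)" "finite (Pow P)" using fin by simp_all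
  ultimately obtain x where x: "fst x \<in> Pow P" "\<forall>\<tau>. \<tau> \<notin> Pow P \<times> Pow F \<longrightarrow> snd x \<tau> = 0"
    "Suc (k + 2) \<le> card {\<tau>\<in>Pow P \<times> Pow F. snd x \<tau> = \<infinity>}" "\<forall>q. \<exists>b\<in>range xs. trunc q b = trunc q x"
    using accum[of "Pow P \<times> Pow F" "Pow P" "range xs" "k + 2"] by blast
  have "clos (Vset P F parr farr A) x" unfolding clos_def
  proof
    fix q
    obtain j where j: "trunc q (xs j) = trunc q x" using x(4) by blast
    obtain v where "v \<in> Vset P F parr farr (restrict_fam A (\<phi> j))" "trunc q v = trunc q (xs j)"
      using xs(4)[of j] unfolding clos_def by blast
    moreover have "Vset P F parr farr (restrict_fam A (\<phi> j)) \<subseteq> Vset P F parr farr A"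
      unfolding Vset_def restrict_fam_def by blast
    ultimately show "\<exists>v\<in>Vset P F parr farr A. trunc q v = trunc q x" using j by auto
  qed
  moreover have "Suc k + 2 \<le> card {\<tau>\<in>Pow P \<times> Pow F. snd x \<tau> = \<infinity>}" using x(3) by simp
  ultimately show ?case using x(1,2) by blast
qed

lemma finite_branch:
  fixes P :: "'p set" and F :: "'f set"
  assumes fin: "finite P" "finite F" and ar: "\<forall>p\<in>P. parr p < 2" "\<forall>f\<in>F. farr f = 0"
  shows "\<exists>n::nat. RS_ge P F parr farr (T_inf P F parr farr) n \<and> \<not> RS_ge P F parr farr (T_inf P F parr farr) (Suc n)"
proof -
  let ?T = "T_inf P F parr farr"
  let ?I = "Pow P \<times> Pow F"
  have notN: "\<not> RS_ge P F parr farr ?T (Suc (card ?I))"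
  proof
    assume "RS_ge P F parr farr ?T (Suc (card ?I))"
    then obtain x :: "'p set \<times> ('p set \<times> 'f set \<Rightarrow> enat)" where "card ?I + 2 \<le> card {\<tau>\<in>?I. snd x \<tau> = \<infinity>}"
      using claim[OF fin ar, of ?T "card ?I"] by blast
    moreover have "card {\<tau>\<in>?I. snd x \<tau> = \<infinity>} \<le> card ?I" using fin by (intro card_mono) auto
    ultimately show False by simp
  qed
  define M0 :: "(('p,'f) U,'p,'f) struc" where "M0 = \<lparr>univ = UNIV, preds = (\<lambda>_ _. False), funs = (\<lambda>_ _. Inr (Inr 0))\<rparr>"
  have "is_struc F farr M0" unfolding M0_def by (rule is_struc_UNIV)
  moreover have "infinite (univ M0)" using infinite_U by (simp add: M0_def)
  ultimately have "Th P F parr farr M0 \<in> ?T" unfolding T_inf_def by blast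
  then have R0: "RS_ge P F parr farr ?T (0::nat)" by (intro RS_ge.zero) (auto simp: nat_is_zero)
  define N where "N = (LEAST N. \<not> RS_ge P F parr farr ?T (N::nat))"
  have N1: "\<not> RS_ge P F parr farr ?T N" unfolding N_def by (rule LeastI[of _ "Suc (card ?I)"]) (rule notN)
  have "N \<noteq> 0"
  proof
    assume "N = 0"
    then show False using N1 R0 by simp
  qed
  then obtain n where n: "N = Suc n" using not0_implies_Suc by blast
  have "RS_ge P F parr farr ?T n" using not_less_Least[of n "\<lambda>N. \<not> RS_ge P F parr farr ?T N"] n N_def by auto
  then show ?thesis using N1 n by blast
qed

theorem theorem3p2:
  fixes P :: "'p set" and F :: "'f set" and parr :: "'p \<Rightarrow> nat" and farr :: "'f \<Rightarrow> nat"
  shows "if finite P \<and> finite F \<and> (\<forall>p\<in>P. parr p < 2) \<and> (\<forall>f\<in>F. farr f = 0)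
         then (\<exists>n::nat. RS_ge P F parr farr (T_inf P F parr farr) n
                      \<and> \<not> RS_ge P F parr farr (T_inf P F parr farr) (Suc n))
         else (\<forall>\<alpha>::'o::wellorder. RS_ge P F parr farr (T_inf P F parr farr) \<alpha>)"
proof (cases "finite P \<and> finite F \<and> (\<forall>p\<in>P. parr p < 2) \<and> (\<forall>f\<in>F. farr f = 0)")
  case True
  have "\<exists>n::nat. RS_ge P F parr farr (T_inf P F parr farr) n
                      \<and> \<not> RS_ge P F parr farr (T_inf P F parr farr) (Suc n)"
    using finite_branch[of P F parr farr] True by blast
  then show ?thesis by (subst if_P[OF True]) assumption
next
  case False
  have "RS_ge P F parr farr (T_inf P F parr farr) \<alpha>" for \<alpha> :: "'o::wellorder"
  proof (cases "infinite P")
    case True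
    then show ?thesis by (rule case_a)
  next
    case nP: False
    show ?thesis
    proof (cases "infinite F")
      case True
      then show ?thesis by (rule case_b)
    next
      case nF: False
      show ?thesis
      proof (cases "\<exists>p\<in>P. \<not> parr p < 2")
        case True
        then obtain p where "p \<in> P" "parr p \<ge> 2" by (auto simp: not_less)
        then show ?thesis by (rule case_c)
      next
        case nA: False
        then obtain f where "f \<in> F" "farr f \<noteq> 0" using False nP nF by blast
        then have "f \<in> F" "farr f \<ge> 1" by auto
        then show ?thesis by (rule case_d)
      qed
    qed
  qed
  then have "\<forall>\<alpha>::'o::wellorder. RS_ge P F parr farr (T_inf P F parr farr) \<alpha>" by blast
  then show ?thesis by (subst if_not_P[OF False]) assumption
qed

end
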